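(* Let $\mathbb{A}\colon\mathbb{R}^d\to\mathbb{R}^d$ be Lipschitz continuous and monotone, let $T>0$ and $X_0\in\mathbb{R}^d$. Then the system (Dual-Anchor ODE) \[ \dot X(t)=-Z(t)-\mathbb{A}(X(t)),\qquad \dot Z(t)=-\frac{1}{T-t}Z(t)-\frac{1}{T-t}\mathbb{A}(X(t)),\qquad t\in(0,T), \] with $X(0)=X_0$, $Z(0)=0$, has a unique solution $X\colon[0,T)\to\mathbb{R}^d$ (together with $Z$), the limit $X(T)=\lim_{t\to T^-}X(t)$ exists, and for every $X_\star\in\mathrm{Zer}\,\mathbb{A}$, \[ \|\mathbb{A}(X(T))\|^2\le\frac{4\|X_0-X_\star\|^2}{T^2}. \]
   Context: $\mathbb{A}$ is monotone if $\langle\mathbb{A}x-\mathbb{A}y,x-y\rangle\ge0$ for all $x,y$. $\mathrm{Zer}\,\mathbb{A}=\{x:\mathbb{A}x=0\}$. *)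

theory Defs
  imports "HOL-Analysis.Analysis"
begin

definition monotone_op :: "('a::real_inner \<Rightarrow> 'a) \<Rightarrow> bool" where
  "monotone_op A \<longleftrightarrow> (\<forall>x y. inner (A x - A y) (x - y) \<ge> 0)"

definition dual_anchor_sol ::
  "('a::euclidean_space \<Rightarrow> 'a) \<Rightarrow> real \<Rightarrow> 'a \<Rightarrow> (real \<Rightarrow> 'a) \<Rightarrow> (real \<Rightarrow> 'a) \<Rightarrow> bool" where
  "dual_anchor_sol A T X0 X Z \<longleftrightarrow>
     continuous_on {0..<T} X \<and> continuous_on {0..<T} Z \<and>
     X 0 = X0 \<and> Z 0 = 0 \<and>
     (\<forall>t\<in>{0<..<T}.
        (X has_vector_derivative (- Z t - A (X t))) (at t) \<and>
        (Z has_vector_derivative (- (1 / (T - t)) *\<^sub>R Z t - (1 / (T - t)) *\<^sub>R A (X t))) (at t))"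

end

theory Submission
  imports Defs
begin

definition zf :: "real \<Rightarrow> (real \<Rightarrow> 'a::euclidean_space) \<Rightarrow> real \<Rightarrow> 'a" where
  "zf T u t = (if t < T then - ((T - t) *\<^sub>R integral {0..t} (\<lambda>s. (1 / (T - s)^2) *\<^sub>R u s)) else - u T)"

lemma int_inv_sq:
  fixes T t :: real
  assumes "0 \<le> t" "t < T"
  shows "((\<lambda>s. 1 / (T - s)^2) has_integral (1 / (T - t) - 1 / T)) {0..t}"
proof -
  have "((\<lambda>s. 1 / (T - s)^2) has_integral ((\<lambda>s. 1 / (T - s)) t - (\<lambda>s. 1 / (T - s)) 0)) {0..t}"
  proof (rule fundamental_theorem_of_calculus)
    show "0 \<le> t" by fact
    fix x assume x: "x \<in> {0..t}"
    then have "T - x \<noteq> 0" using assms by auto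
    then have "((\<lambda>s. 1 / (T - s)) has_real_derivative 1 / (T - x)^2) (at x within {0..t})"
      by (auto intro!: derivative_eq_intros simp: power2_eq_square)
    then show "((\<lambda>s. 1 / (T - s)) has_vector_derivative 1 / (T - x)^2) (at x within {0..t})"
      by (simp add: has_real_derivative_iff_has_vector_derivative)
  qed
  then show ?thesis by simp
qed

lemma zf_diff_bound:
  fixes u1 u2 :: "real \<Rightarrow> 'a::euclidean_space"
  assumes t: "0 \<le> t" "t \<le> T" and c1: "continuous_on {0..t} u1" and c2: "continuous_on {0..t} u2"
    and B: "\<And>s. s \<in> {0..t} \<Longrightarrow> norm (u1 s - u2 s) \<le> B"
  shows "norm (zf T u1 t - zf T u2 t) \<le> B"
proof (cases "t < T")
  case False
  then have "t = T" using t by auto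
  then show ?thesis using B[of T] t by (simp add: zf_def norm_minus_commute)
next
  case True
  have "norm (u1 0 - u2 0) \<le> B" using B[of 0] t by simp
  then have B0: "0 \<le> B" using norm_ge_zero[of "u1 0 - u2 0"] by linarith
  define f where "f = (\<lambda>u s. (1 / (T - s)^2) *\<^sub>R (u s :: 'a))"
  have cf: "continuous_on {0..t} (f u)" if "continuous_on {0..t} u" for u
    unfolding f_def using True that by (auto intro!: continuous_intros)
  have i1: "f u1 integrable_on {0..t}" and i2: "f u2 integrable_on {0..t}"
    using cf[OF c1] cf[OF c2] integrable_continuous_interval by blast+
  have hi: "((\<lambda>s. 1 / (T - s)^2) has_integral (1 / (T - t) - 1 / T)) {0..t}"
    using int_inv_sq t True by blast
  have "zf T u1 t - zf T u2 t = - ((T - t) *\<^sub>R (integral {0..t} (f u1) - integral {0..t} (f u2)))"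
    using True by (simp add: zf_def f_def algebra_simps)
  also have "\<dots> = - ((T - t) *\<^sub>R integral {0..t} (\<lambda>s. f u1 s - f u2 s))"
    using integral_diff[OF i1 i2] by simp
  finally have eq: "zf T u1 t - zf T u2 t = - ((T - t) *\<^sub>R integral {0..t} (\<lambda>s. f u1 s - f u2 s))" .
  have "norm (integral {0..t} (\<lambda>s. f u1 s - f u2 s)) \<le> integral {0..t} (\<lambda>s. B * (1 / (T - s)^2))"
  proof (rule integral_norm_bound_integral)
    show "(\<lambda>s. f u1 s - f u2 s) integrable_on {0..t}" using i1 i2 by (rule integrable_diff)
    show "(\<lambda>s. B * (1 / (T - s)^2)) integrable_on {0..t}"
      using has_integral_mult_right[OF hi, of B] by blast
    fix s assume s: "s \<in> {0..t}"
    have "f u1 s - f u2 s = (1 / (T - s)^2) *\<^sub>R (u1 s - u2 s)" by (simp add: f_def algebra_simps)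
    then have "norm (f u1 s - f u2 s) = (1 / (T - s)^2) * norm (u1 s - u2 s)" by simp
    also have "\<dots> \<le> (1 / (T - s)^2) * B" using B[OF s] by (intro mult_left_mono) auto
    finally show "norm (f u1 s - f u2 s) \<le> B * (1 / (T - s)^2)" by (simp add: mult.commute)
  qed
  also have "\<dots> = B * (1 / (T - t) - 1 / T)"
    using has_integral_mult_right[OF hi, of B] by (rule integral_unique)
  finally have n: "norm (integral {0..t} (\<lambda>s. f u1 s - f u2 s)) \<le> B * (1 / (T - t) - 1 / T)" .
  have "norm (zf T u1 t - zf T u2 t) = (T - t) * norm (integral {0..t} (\<lambda>s. f u1 s - f u2 s))"
    using True by (simp add: eq)
  also have "\<dots> \<le> (T - t) * (B * (1 / (T - t) - 1 / T))" using n True by (intro mult_left_mono) auto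
  also have "\<dots> = B - B * (T - t) / T" using True t by (simp add: field_simps)
  also have "\<dots> \<le> B" using B0 True t by (simp add: divide_nonneg_nonneg)
  finally show ?thesis .
qed


lemma cont_half_open:
  fixes f :: "real \<Rightarrow> 'b::topological_space"
  assumes "\<And>b. b < T \<Longrightarrow> continuous_on {0..b} f"
  shows "continuous_on {0..<T} f"
  unfolding continuous_on_eq_continuous_within
proof
  fix x assume x: "x \<in> {0..<T}"
  define b where "b = (x + T) / 2"
  have bT: "b < T" and xb: "x < b" using x by (auto simp: b_def)
  have xin: "x \<in> {0..b}" using x xb by simp
  have "continuous (at x within {0..b}) f"
    using continuous_on_eq_continuous_within[THEN iffD1, OF assms[OF bT]] xin by blast
  moreover have "at x within {0..<T} = at x within {0..b}"
  proof (rule at_within_nhd[of _ "{..<b}"])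
    show "x \<in> {..<b}" using xb by simp
    show "open {..<b}" by simp
    show "{0..<T} \<inter> {..<b} - {x} = {0..b} \<inter> {..<b} - {x}" using bT by auto
  qed
  ultimately show "continuous (at x within {0..<T}) f" by simp
qed

lemma cont_close:
  fixes f :: "real \<Rightarrow> 'b::topological_space"
  assumes "continuous_on {0..<T} f" "(f \<longlongrightarrow> f T) (at_left T)" "0 < T"
  shows "continuous_on {0..T} f"
  unfolding continuous_on_eq_continuous_within
proof
  fix x assume x: "x \<in> {0..T}"
  show "continuous (at x within {0..T}) f"
  proof (cases "x < T")
    case True
    have xin: "x \<in> {0..<T}" using x True by simp
    have "continuous (at x within {0..<T}) f"
      using continuous_on_eq_continuous_within[THEN iffD1, OF assms(1)] xin by blast
    moreover have "at x within {0..T} = at x within {0..<T}"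
    proof (rule at_within_nhd[of _ "{..<T}"])
      show "x \<in> {..<T}" using True by simp
      show "open {..<T}" by simp
      show "{0..T} \<inter> {..<T} - {x} = {0..<T} \<inter> {..<T} - {x}" by auto
    qed
    ultimately show ?thesis by simp
  next
    case False
    then have "x = T" using x by auto
    have "at T within {0..T} = at_left T" using assms(3) by (rule at_within_Icc_at_left)
    then show ?thesis using assms(2) \<open>x = T\<close> by (simp add: continuous_within)
  qed
qed

lemma zf_deriv:
  fixes u :: "real \<Rightarrow> 'a::euclidean_space"
  assumes cu: "continuous_on {0..<T} u" and t: "0 < t" "t < T"
  shows "(zf T u has_vector_derivative (- (1 / (T - t)) *\<^sub>R zf T u t - (1 / (T - t)) *\<^sub>R u t)) (at t)"
proof -
  define b where "b = (t + T) / 2"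
  have bT: "b < T" and tb: "t < b" using t by (auto simp: b_def)
  define f where "f = (\<lambda>s. (1 / (T - s)^2) *\<^sub>R u s)"
  have cf: "continuous_on {0..b} f"
  proof -
    have "continuous_on {0..b} u" by (rule continuous_on_subset[OF cu]) (use bT in auto)
    moreover have "continuous_on {0..b} (\<lambda>s. 1 / (T - s)^2)"
      using bT by (intro continuous_intros) auto
    ultimately show ?thesis unfolding f_def by (rule continuous_on_scaleR[rotated])
  qed
  have dI: "((\<lambda>s. integral {0..s} f) has_vector_derivative f t) (at t)"
  proof -
    have "t \<in> {0..b}" using t tb by simp
    from integral_has_vector_derivative[OF cf this]
    have "((\<lambda>s. integral {0..s} f) has_vector_derivative f t) (at t within {0..b})" .
    moreover have "at t within {0..b} = at t" using t tb by (intro at_within_Icc_at) auto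
    ultimately show ?thesis by (simp only:)
  qed
  have dg: "((\<lambda>s. - ((T - s) *\<^sub>R integral {0..s} f)) has_vector_derivative
      - ((T - t) *\<^sub>R f t + (-1) *\<^sub>R integral {0..t} f)) (at t)"
  proof -
    have "((\<lambda>s. (T - s) *\<^sub>R integral {0..s} f) has_vector_derivative
      ((T - t) *\<^sub>R f t + (-1) *\<^sub>R integral {0..t} f)) (at t)"
      by (rule has_vector_derivative_scaleR[OF _ dI]) (auto intro!: derivative_eq_intros)
    then show ?thesis by (rule has_vector_derivative_minus)
  qed
  have eq: "- ((T - t) *\<^sub>R f t + (-1) *\<^sub>R integral {0..t} f) =
      (- (1 / (T - t)) *\<^sub>R zf T u t - (1 / (T - t)) *\<^sub>R u t)"
  proof -
    have z: "zf T u t = - ((T - t) *\<^sub>R integral {0..t} f)" using t by (simp add: zf_def f_def)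
    have ft: "(T - t) *\<^sub>R f t = (1 / (T - t)) *\<^sub>R u t" using t by (simp add: f_def power2_eq_square)
    have one: "(1 / (T - t)) * (T - t) = 1" using t by simp
    show ?thesis using t by (simp add: z ft one)
  qed
  show ?thesis
  proof (rule has_vector_derivative_transform_within_open[of _ _ _ "{..<T}"])
    show "((\<lambda>s. - ((T - s) *\<^sub>R integral {0..s} f)) has_vector_derivative
      (- (1 / (T - t)) *\<^sub>R zf T u t - (1 / (T - t)) *\<^sub>R u t)) (at t)" using dg eq by simp
    show "open {..<T}" by simp
    show "t \<in> {..<T}" using t by simp
    show "- ((T - y) *\<^sub>R integral {0..y} f) = zf T u y" if "y \<in> {..<T}" for y
      using that by (simp add: zf_def f_def)
  qed
qed

lemma zf_cont:
  fixes u :: "real \<Rightarrow> 'a::euclidean_space"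
  assumes cu: "continuous_on {0..<T} u"
  shows "continuous_on {0..<T} (zf T u)"
proof (rule cont_half_open)
  fix b assume bT: "b < T"
  define f where "f = (\<lambda>s. (1 / (T - s)^2) *\<^sub>R u s)"
  have cf: "continuous_on {0..b} f"
  proof -
    have "continuous_on {0..b} u" by (rule continuous_on_subset[OF cu]) (use bT in auto)
    moreover have "continuous_on {0..b} (\<lambda>s. 1 / (T - s)^2)"
      using bT by (intro continuous_intros) auto
    ultimately show ?thesis unfolding f_def by (rule continuous_on_scaleR[rotated])
  qed
  have "continuous_on {0..b} (\<lambda>s. integral {0..s} f)"
    using cf by (intro indefinite_integral_continuous_1 integrable_continuous_interval)
  then have "continuous_on {0..b} (\<lambda>s. - ((T - s) *\<^sub>R integral {0..s} f))"
    by (intro continuous_intros)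
  then show "continuous_on {0..b} (zf T u)"
    by (rule continuous_on_cong[THEN iffD1, rotated 2]) (use bT in \<open>auto simp: zf_def f_def\<close>)
qed

lemma zf_lim:
  fixes u :: "real \<Rightarrow> 'a::euclidean_space"
  assumes cu: "continuous_on {0..T} u" and T: "0 < T"
  shows "(zf T u \<longlongrightarrow> - u T) (at_left T)"
proof -
  define w where "w = u T"
  have "compact ((\<lambda>s. u s - w) ` {0..T})"
    using cu by (intro compact_continuous_image continuous_intros) auto
  then obtain Bd where Bd: "\<And>s. s \<in> {0..T} \<Longrightarrow> norm (u s - w) \<le> Bd"
    using compact_imp_bounded bounded_iff by (metis (no_types, lifting) image_eqI)
  have Bd0: "0 \<le> Bd" using Bd[of T] T by (simp add: w_def)
  show ?thesis
    unfolding tendsto_iff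
  proof (intro allI impI)
    fix \<epsilon> :: real assume "0 < \<epsilon>"
    define e where "e = \<epsilon> / 2"
    have e: "0 < e" using \<open>0 < \<epsilon>\<close> by (simp add: e_def)
    have "T \<in> {0..T}" using T by simp
    have "\<forall>x\<in>{0..T}. \<forall>\<epsilon>>0. \<exists>\<delta>>0. \<forall>x'\<in>{0..T}. dist x' x < \<delta> \<longrightarrow> dist (u x') (u x) < \<epsilon>"
      by (rule continuous_on_iff[THEN iffD1, OF cu])
    from this[rule_format, OF \<open>T \<in> {0..T}\<close> e]
    obtain \<delta> where \<delta>0: "0 < \<delta>" and \<delta>1: "\<forall>x'\<in>{0..T}. dist x' T < \<delta> \<longrightarrow> dist (u x') (u T) < e"
      by (elim exE conjE) (rule that)
    have \<delta>: "0 < \<delta>" "\<And>s. s \<in> {0..T} \<Longrightarrow> dist s T < \<delta> \<Longrightarrow> dist (u s) (u T) < e"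
      using \<delta>0 \<delta>1 by auto
    define d where "d = min (\<delta> / 2) (T / 2)"
    have d: "0 < d" "d < \<delta>" "d \<le> T / 2" using \<delta> T by (auto simp: d_def)
    define C where "C = T * Bd / d^2 + norm w / T"
    have C0: "0 \<le> C" using Bd0 T d unfolding C_def by (intro add_nonneg_nonneg divide_nonneg_nonneg mult_nonneg_nonneg) auto
    define b where "b = max (T - d) (T - e / (C + 1))"
    have "b < T" using d e C0 by (simp add: b_def)
    have main: "norm (zf T u t + w) < \<epsilon>" if tb: "b < t" "t < T" for t
    proof -
      have t0: "0 \<le> t" using tb d unfolding b_def by linarith
      have tTd: "T - t < d" using tb by (simp add: b_def)
      have "T - t < e / (C + 1)" using tb by (simp add: b_def)
      then have tTe: "(T - t) * (C + 1) < e" using C0 by (simp add: pos_less_divide_eq)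
      define g where "g = (\<lambda>s. (1 / (T - s)^2) *\<^sub>R (u s - w))"
      define h where "h = (\<lambda>s. (1 / (T - s)^2) *\<^sub>R w)"
      have cu0: "continuous_on {0..t} u" by (rule continuous_on_subset[OF cu]) (use tb in auto)
      have cinv: "continuous_on {0..t} (\<lambda>s. 1 / (T - s)^2)" using tb by (intro continuous_intros) auto
      have ig: "g integrable_on {0..t}"
        unfolding g_def
        by (rule integrable_continuous_interval, rule continuous_on_scaleR[OF cinv continuous_on_diff[OF cu0 continuous_on_const]])
      have hi: "((\<lambda>s. 1 / (T - s)^2) has_integral (1 / (T - t) - 1 / T)) {0..t}"
        by (rule int_inv_sq[OF t0 tb(2)])
      have ih: "(h has_integral ((1 / (T - t) - 1 / T) *\<^sub>R w)) {0..t}"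
        unfolding h_def by (rule has_integral_scaleR_left[OF hi])
      have fsplit: "(\<lambda>s. (1 / (T - s)^2) *\<^sub>R u s) = (\<lambda>s. g s + h s)"
        by (auto simp: g_def h_def algebra_simps)
      have "integral {0..t} (\<lambda>s. (1 / (T - s)^2) *\<^sub>R u s) = integral {0..t} g + (1 / (T - t) - 1 / T) *\<^sub>R w"
        unfolding fsplit using integral_add[OF ig has_integral_integrable[OF ih]] integral_unique[OF ih] by simp
      then have "zf T u t + w = - ((T - t) *\<^sub>R integral {0..t} g) - ((T - t) * (1 / (T - t) - 1 / T)) *\<^sub>R w + w"
        using tb by (simp add: zf_def scaleR_add_right)
      moreover have "(T - t) * (1 / (T - t) - 1 / T) = 1 - (T - t) / T" using tb T by (simp add: field_simps)
      ultimately have zeq: "zf T u t + w = - ((T - t) *\<^sub>R integral {0..t} g) + ((T - t) / T) *\<^sub>R w"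
        by (simp add: scaleR_diff_left)
      have hb: "((\<lambda>s. e * (1 / (T - s)^2) + Bd / d^2) has_integral (e * (1 / (T - t) - 1 / T) + t * (Bd / d^2))) {0..t}"
        using has_integral_add[OF has_integral_mult_right[OF hi, of e] has_integral_const_real[of "Bd / d^2" 0 t]] t0
        by simp
      have "norm (integral {0..t} g) \<le> integral {0..t} (\<lambda>s. e * (1 / (T - s)^2) + Bd / d^2)"
      proof (rule integral_norm_bound_integral[OF ig])
        show "(\<lambda>s. e * (1 / (T - s)^2) + Bd / d^2) integrable_on {0..t}" using hb by blast
        fix s assume s: "s \<in> {0..t}"
        have sT: "s \<in> {0..T}" using s tb by auto
        have ng: "norm (g s) = (1 / (T - s)^2) * norm (u s - w)" by (simp add: g_def)
        show "norm (g s) \<le> e * (1 / (T - s)^2) + Bd / d^2"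
        proof (cases "T - s < \<delta>")
          case True
          then have "norm (u s - w) < e" using \<delta>(2)[OF sT] s tb by (simp add: dist_norm w_def abs_if)
          then have "norm (g s) \<le> e * (1 / (T - s)^2)" unfolding ng
            by (simp add: divide_right_mono less_imp_le)
          moreover have "0 \<le> Bd / d^2" using Bd0 by simp
          ultimately show ?thesis by linarith
        next
          case False
          then have "d^2 \<le> (T - s)^2" using d by (intro power_mono) auto
          moreover have "0 < (T - s)^2 * d^2" using d False by (intro mult_pos_pos) auto
          ultimately have "1 / (T - s)^2 \<le> 1 / d^2" by (intro divide_left_mono) auto
          then have "norm (g s) \<le> (1 / d^2) * Bd" unfolding ng
            using Bd[OF sT] Bd0 by (intro mult_mono) auto
          moreover have "0 \<le> e * (1 / (T - s)^2)" using e by simp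
          ultimately show ?thesis by simp
        qed
      qed
      also have "\<dots> = e * (1 / (T - t) - 1 / T) + t * (Bd / d^2)" using hb by (rule integral_unique)
      also have "\<dots> \<le> e / (T - t) + T * Bd / d^2"
      proof -
        have "e * (1 / (T - t) - 1 / T) \<le> e / (T - t)" using e T by (simp add: right_diff_distrib)
        moreover have "t * (Bd / d^2) \<le> T * Bd / d^2" using tb Bd0 by (simp add: divide_right_mono mult_right_mono)
        ultimately show ?thesis by linarith
      qed
      finally have nI: "norm (integral {0..t} g) \<le> e / (T - t) + T * Bd / d^2" .
      have "norm (zf T u t + w) \<le> (T - t) * norm (integral {0..t} g) + ((T - t) / T) * norm w"
        unfolding zeq using tb T by (intro order.trans[OF norm_triangle_ineq]) simp
      also have "\<dots> \<le> (T - t) * (e / (T - t) + T * Bd / d^2) + ((T - t) / T) * norm w"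
        using nI tb by (intro add_right_mono mult_left_mono) auto
      also have "\<dots> = (T - t) * (e / (T - t)) + (T - t) * C" by (simp add: C_def distrib_left)
      finally have n1: "norm (zf T u t + w) \<le> (T - t) * (e / (T - t)) + (T - t) * C" .
      have n3: "(T - t) * (e / (T - t)) = e" using tb by simp
      have n4: "(T - t) * C \<le> (T - t) * (C + 1)" using tb by (intro mult_left_mono) auto
      show ?thesis using n1 n3 n4 tTe e_def by linarith
    qed
    show "\<forall>\<^sub>F t in at_left T. dist (zf T u t) (- u T) < \<epsilon>"
      unfolding eventually_at_left_field
      using \<open>b < T\<close> main by (auto simp: dist_norm w_def)
  qed
qed

lemma zf_cont_closed:
  fixes u :: "real \<Rightarrow> 'a::euclidean_space"
  assumes cu: "continuous_on {0..T} u" and T: "0 < T"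
  shows "continuous_on {0..T} (zf T u)"
proof (rule cont_close[OF _ _ T])
  show "continuous_on {0..<T} (zf T u)"
    by (rule zf_cont, rule continuous_on_subset[OF cu]) auto
  show "(zf T u \<longlongrightarrow> zf T u T) (at_left T)"
    using zf_lim[OF cu T] by (simp add: zf_def)
qed

definition GX :: "('a::euclidean_space \<Rightarrow> 'a) \<Rightarrow> real \<Rightarrow> (real \<Rightarrow> 'a) \<Rightarrow> real \<Rightarrow> 'a" where
  "GX A T X s = zf T (\<lambda>r. A (X r)) s + A (X s)"

lemma GX_cont_closed:
  fixes A :: "'a::euclidean_space \<Rightarrow> 'a"
  assumes cA: "continuous_on UNIV A" and cX: "continuous_on {0..T} X" and T: "0 < T"
  shows "continuous_on {0..T} (GX A T X)"
proof -
  have cu: "continuous_on {0..T} (\<lambda>r. A (X r))"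
    using continuous_on_compose[OF cX continuous_on_subset[OF cA]] by (simp add: o_def)
  show ?thesis unfolding GX_def
    by (rule continuous_on_add[OF zf_cont_closed[OF cu T] cu])
qed

lemma GX_cont_open:
  fixes A :: "'a::euclidean_space \<Rightarrow> 'a"
  assumes cA: "continuous_on UNIV A" and cX: "continuous_on {0..<T} X"
  shows "continuous_on {0..<T} (GX A T X)"
proof -
  have cu: "continuous_on {0..<T} (\<lambda>r. A (X r))"
    using continuous_on_compose[OF cX continuous_on_subset[OF cA]] by (simp add: o_def)
  show ?thesis unfolding GX_def
    by (rule continuous_on_add[OF zf_cont[OF cu] cu])
qed

lemma exp_integral:
  fixes K t :: real
  assumes "0 < K" "0 \<le> t"
  shows "((\<lambda>s. exp (K * s)) has_integral ((exp (K * t) - 1) / K)) {0..t}"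
proof -
  have "((\<lambda>s. exp (K * s)) has_integral ((\<lambda>s. exp (K * s) / K) t - (\<lambda>s. exp (K * s) / K) 0)) {0..t}"
  proof (rule fundamental_theorem_of_calculus)
    show "0 \<le> t" by fact
    fix x assume x: "x \<in> {0..t}"
    have "((\<lambda>s. exp (K * s) / K) has_real_derivative exp (K * x)) (at x within {0..t})"
      using assms by (auto intro!: derivative_eq_intros)
    then show "((\<lambda>s. exp (K * s) / K) has_vector_derivative exp (K * x)) (at x within {0..t})"
      by (simp add: has_real_derivative_iff_has_vector_derivative)
  qed
  then show ?thesis by (simp add: diff_divide_distrib)
qed

lemma core:
  fixes A :: "'a::euclidean_space \<Rightarrow> 'a"
  assumes lip: "L-lipschitz_on UNIV A" and K: "0 < K" and b: "0 \<le> b" "b \<le> T"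
    and c1: "continuous_on {0..b} X1" and c2: "continuous_on {0..b} X2"
    and g1: "continuous_on {0..b} (GX A T X1)" and g2: "continuous_on {0..b} (GX A T X2)"
    and D: "\<And>s. s \<in> {0..b} \<Longrightarrow> norm (X1 s - X2 s) \<le> exp (K * s) * D"
    and t: "t \<in> {0..b}"
  shows "norm (integral {0..t} (GX A T X1) - integral {0..t} (GX A T X2)) \<le> (2 * L / K) * exp (K * t) * D"
proof -
  have L0: "0 \<le> L" using lip by (rule lipschitz_on_nonneg)
  have cA: "continuous_on UNIV A" using lip by (rule lipschitz_on_continuous_on)
  have "norm (X1 0 - X2 0) \<le> D" using D[of 0] b by simp
  then have D0: "0 \<le> D" using norm_ge_zero[of "X1 0 - X2 0"] by linarith
  have Alip: "norm (A x - A y) \<le> L * norm (x - y)" for x y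
    using lipschitz_onD[OF lip, of x y] by (simp add: dist_norm)
  have t0: "0 \<le> t" "t \<le> b" using t by auto
  have sub: "{0..t} \<subseteq> {0..b}" using t0 by auto
  have i1: "GX A T X1 integrable_on {0..t}"
    by (rule integrable_continuous_interval, rule continuous_on_subset[OF g1 sub])
  have i2: "GX A T X2 integrable_on {0..t}"
    by (rule integrable_continuous_interval, rule continuous_on_subset[OF g2 sub])
  have ptw: "norm (GX A T X1 s - GX A T X2 s) \<le> 2 * L * D * exp (K * s)" if s: "s \<in> {0..t}" for s
  proof -
    have s0: "0 \<le> s" "s \<le> b" using s t0 by auto
    have ssub: "{0..s} \<subseteq> {0..b}" using s0 by auto
    have cu1: "continuous_on {0..s} (\<lambda>r. A (X1 r))"
      using continuous_on_compose[OF continuous_on_subset[OF c1 ssub] continuous_on_subset[OF cA]]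
      by (simp add: o_def)
    have cu2: "continuous_on {0..s} (\<lambda>r. A (X2 r))"
      using continuous_on_compose[OF continuous_on_subset[OF c2 ssub] continuous_on_subset[OF cA]]
      by (simp add: o_def)
    have bnd: "norm (A (X1 r) - A (X2 r)) \<le> L * D * exp (K * s)" if r: "r \<in> {0..s}" for r
    proof -
      have "norm (A (X1 r) - A (X2 r)) \<le> L * norm (X1 r - X2 r)" by (rule Alip)
      also have "\<dots> \<le> L * (exp (K * r) * D)" using D[of r] r s0 L0 by (intro mult_left_mono) auto
      also have "\<dots> \<le> L * (exp (K * s) * D)" using r K L0 D0
        by (intro mult_left_mono mult_right_mono) auto
      finally show ?thesis by (simp add: algebra_simps)
    qed
    have z: "norm (zf T (\<lambda>r. A (X1 r)) s - zf T (\<lambda>r. A (X2 r)) s) \<le> L * D * exp (K * s)"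
      using s0 b by (intro zf_diff_bound[OF _ _ cu1 cu2 bnd]) auto
    have a: "norm (A (X1 s) - A (X2 s)) \<le> L * D * exp (K * s)" using bnd[of s] s0 by simp
    have "GX A T X1 s - GX A T X2 s = (zf T (\<lambda>r. A (X1 r)) s - zf T (\<lambda>r. A (X2 r)) s) + (A (X1 s) - A (X2 s))"
      by (simp add: GX_def algebra_simps)
    then have "norm (GX A T X1 s - GX A T X2 s) \<le> norm (zf T (\<lambda>r. A (X1 r)) s - zf T (\<lambda>r. A (X2 r)) s) + norm (A (X1 s) - A (X2 s))"
      by (simp add: norm_triangle_ineq)
    then show ?thesis using z a by linarith
  qed
  have ie: "((\<lambda>s. 2 * L * D * exp (K * s)) has_integral (2 * L * D * ((exp (K * t) - 1) / K))) {0..t}"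
    by (rule has_integral_mult_right[OF exp_integral[OF K t0(1)]])
  have "norm (integral {0..t} (GX A T X1) - integral {0..t} (GX A T X2)) =
      norm (integral {0..t} (\<lambda>s. GX A T X1 s - GX A T X2 s))"
    by (simp add: integral_diff[OF i1 i2])
  also have "\<dots> \<le> integral {0..t} (\<lambda>s. 2 * L * D * exp (K * s))"
    by (rule integral_norm_bound_integral[OF integrable_diff[OF i1 i2] has_integral_integrable[OF ie] ptw])
  also have "\<dots> = 2 * L * D * ((exp (K * t) - 1) / K)" using ie by (rule integral_unique)
  also have "\<dots> \<le> (2 * L / K) * exp (K * t) * D"
  proof -
    have "2 * L * D * ((exp (K * t) - 1) / K) = (2 * L / K) * exp (K * t) * D - (2 * L / K) * D"
      using K by (simp add: field_simps)
    moreover have "0 \<le> (2 * L / K) * D" using L0 K D0 by simp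
    ultimately show ?thesis by linarith
  qed
  finally show ?thesis .
qed

definition PhiX :: "('a::euclidean_space \<Rightarrow> 'a) \<Rightarrow> real \<Rightarrow> 'a \<Rightarrow> (real \<Rightarrow> 'a) \<Rightarrow> real \<Rightarrow> 'a" where
  "PhiX A T X0 X t = X0 - integral {0..t} (GX A T X)"

lemma PhiX_cont:
  fixes A :: "'a::euclidean_space \<Rightarrow> 'a"
  assumes cA: "continuous_on UNIV A" and cX: "continuous_on {0..T} X" and T: "0 < T"
  shows "continuous_on {0..T} (PhiX A T X0 X)"
  unfolding PhiX_def
  by (intro continuous_on_diff continuous_on_const indefinite_integral_continuous_1
      integrable_continuous_interval GX_cont_closed[OF cA cX T])

lemma clamp_real: "clamp 0 T (x::real) \<in> {0..T}" if "0 \<le> T"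
proof -
  have "clamp 0 T x \<in> cbox 0 T" using that by (intro clamp_in_interval) auto
  then show ?thesis by simp
qed

lemma exists_fp:
  fixes A :: "'a::euclidean_space \<Rightarrow> 'a"
  assumes lip: "L-lipschitz_on UNIV A" and T: "0 < T"
  shows "\<exists>X. continuous_on UNIV X \<and> (\<forall>t\<in>{0..T}. X t = PhiX A T X0 X t)"
proof -
  have L0: "0 \<le> L" using lip by (rule lipschitz_on_nonneg)
  have cA: "continuous_on UNIV A" using lip by (rule lipschitz_on_continuous_on)
  define K where "K = 4 * L + 1"
  have K: "0 < K" using L0 by (simp add: K_def)
  have KL: "2 * L / K \<le> 1 / 2" using K L0 by (simp add: K_def field_simps)
  define Xg where "Xg = (\<lambda>(g :: real \<Rightarrow>\<^sub>C 'a) t. exp (K * t) *\<^sub>R apply_bcontfun g t)"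
  have cXg: "continuous_on S (Xg g)" for g S
    unfolding Xg_def by (intro continuous_intros) auto
  define fg where "fg = (\<lambda>g t. exp (- (K * t)) *\<^sub>R PhiX A T X0 (Xg g) t)"
  have cfg: "continuous_on (cbox 0 T) (fg g)" for g
  proof -
    have "continuous_on {0..T} (fg g)"
      unfolding fg_def by (intro continuous_on_scaleR continuous_intros PhiX_cont[OF cA cXg T])
    then show ?thesis by simp
  qed
  have exh: "\<exists>h :: real \<Rightarrow>\<^sub>C 'a. \<forall>x. apply_bcontfun h x = fg g (clamp 0 T x)" for g
  proof -
    obtain h :: "real \<Rightarrow>\<^sub>C 'a" where "\<And>x. x \<in> cbox 0 T \<Longrightarrow> h x = fg g x" "\<And>x. h x = fg g (clamp 0 T x)"
      by (rule continuous_on_cbox_bcontfunE[OF cfg[of g]]) blast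
    then show ?thesis by blast
  qed
  define \<Psi> where "\<Psi> = (\<lambda>g. SOME h :: real \<Rightarrow>\<^sub>C 'a. \<forall>x. apply_bcontfun h x = fg g (clamp 0 T x))"
  have \<Psi>: "apply_bcontfun (\<Psi> g) x = fg g (clamp 0 T x)" for g x
    unfolding \<Psi>_def using someI_ex[OF exh[of g]] by blast
  have contr: "dist (\<Psi> g1) (\<Psi> g2) \<le> (1 / 2) * dist g1 g2" for g1 g2
  proof (rule dist_bound)
    fix x
    define c where "c = clamp 0 T x"
    have c: "c \<in> {0..T}" unfolding c_def using T by (intro clamp_real) simp
    define D where "D = dist g1 g2"
    have D0: "0 \<le> D" by (simp add: D_def)
    have Db: "norm (Xg g1 s - Xg g2 s) \<le> exp (K * s) * D" for s
    proof -
      have "Xg g1 s - Xg g2 s = exp (K * s) *\<^sub>R (apply_bcontfun g1 s - apply_bcontfun g2 s)"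
        by (simp add: Xg_def algebra_simps)
      then have "norm (Xg g1 s - Xg g2 s) = exp (K * s) * dist (apply_bcontfun g1 s) (apply_bcontfun g2 s)"
        by (simp add: dist_norm)
      also have "\<dots> \<le> exp (K * s) * D" unfolding D_def by (intro mult_left_mono dist_bounded) auto
      finally show ?thesis .
    qed
    have cr: "norm (integral {0..c} (GX A T (Xg g1)) - integral {0..c} (GX A T (Xg g2))) \<le> (2 * L / K) * exp (K * c) * D"
      using T c
      by (intro core[OF lip K, of T T] cXg GX_cont_closed[OF cA cXg T] Db) auto
    have "dist (apply_bcontfun (\<Psi> g1) x) (apply_bcontfun (\<Psi> g2) x) = norm (fg g1 c - fg g2 c)"
      by (simp add: \<Psi> c_def dist_norm)
    also have "fg g1 c - fg g2 c = exp (- (K * c)) *\<^sub>R (integral {0..c} (GX A T (Xg g2)) - integral {0..c} (GX A T (Xg g1)))"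
      by (simp add: fg_def PhiX_def algebra_simps)
    also have "norm \<dots> = exp (- (K * c)) * norm (integral {0..c} (GX A T (Xg g1)) - integral {0..c} (GX A T (Xg g2)))"
      by (simp add: norm_minus_commute)
    also have "\<dots> \<le> exp (- (K * c)) * ((2 * L / K) * exp (K * c) * D)"
      using cr by (intro mult_left_mono) auto
    also have "\<dots> = (2 * L / K) * D" by (simp add: exp_minus field_simps)
    also have "\<dots> \<le> (1 / 2) * D" using KL D0 by (intro mult_right_mono) auto
    finally show "dist (apply_bcontfun (\<Psi> g1) x) (apply_bcontfun (\<Psi> g2) x) \<le> 1 / 2 * dist g1 g2"
      by (simp add: D_def)
  qed
  obtain g where g: "\<Psi> g = g"
    using banach_fix_type[of "1/2" \<Psi>] contr by auto
  show ?thesis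
  proof (intro exI conjI ballI)
    show "continuous_on UNIV (Xg g)" by (rule cXg)
    fix t :: real assume t: "t \<in> {0..T}"
    have "clamp 0 T t = t" using t by simp
    then have "apply_bcontfun g t = fg g t" using \<Psi>[of g t] g by simp
    then show "Xg g t = PhiX A T X0 (Xg g) t"
      by (simp add: Xg_def fg_def exp_minus)
  qed
qed

lemma inner_deriv:
  fixes f g :: "real \<Rightarrow> 'a::real_inner"
  assumes "(f has_vector_derivative f') (at x)" "(g has_vector_derivative g') (at x)"
  shows "((\<lambda>t. inner (f t) (g t)) has_real_derivative (inner (f x) g' + inner f' (g x))) (at x)"
  using bounded_bilinear.has_vector_derivative[OF bounded_bilinear_inner assms]
  by (simp add: has_real_derivative_iff_has_vector_derivative)

lemma energy:
  fixes A :: "'a::euclidean_space \<Rightarrow> 'a" and X Z :: "real \<Rightarrow> 'a"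
  assumes mono: "monotone_op A" and T: "0 < T" and sol: "dual_anchor_sol A T X0 X Z"
    and Zlim: "(Z \<longlongrightarrow> - A XT) (at_left T)"
    and Xlip: "\<And>t. t \<in> {0..<T} \<Longrightarrow> norm (X t - XT) \<le> M * (T - t)"
  shows "(norm (A XT))^2 \<le> (2 / T) * inner (A XT) (X0 - XT)"
proof -
  define w where "w = A XT"
  define E where "E = (\<lambda>t. - inner (Z t) (Z t) - 2 * inner (Z t) w + (2 / (T - t)) * inner (Z t + w) (X t - XT))"
  have cX: "continuous_on {0..<T} X" and cZ: "continuous_on {0..<T} Z" and X0: "X 0 = X0" and Z0: "Z 0 = 0"
    and dX: "\<And>t. t \<in> {0<..<T} \<Longrightarrow> (X has_vector_derivative (- Z t - A (X t))) (at t)"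
    and dZ: "\<And>t. t \<in> {0<..<T} \<Longrightarrow> (Z has_vector_derivative (- (1 / (T - t)) *\<^sub>R Z t - (1 / (T - t)) *\<^sub>R A (X t))) (at t)"
    using sol unfolding dual_anchor_sol_def by auto
  have E0: "E 0 = (2 / T) * inner w (X0 - XT)" by (simp add: E_def X0 Z0)
  have dE: "(E has_real_derivative (- (2 / (T - x)^2) * inner (A (X x) - w) (X x - XT))) (at x)"
    if x: "x \<in> {0<..<T}" for x
  proof -
    define a where "a = Z x"
    define u where "u = A (X x)"
    define P where "P = X x - XT"
    define \<tau> where "\<tau> = T - x"
    have \<tau>: "0 < \<tau>" using x by (simp add: \<tau>_def)
    define Z' where "Z' = - (1 / \<tau>) *\<^sub>R a - (1 / \<tau>) *\<^sub>R u"
    define X' where "X' = - a - u"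
    have dZ': "(Z has_vector_derivative Z') (at x)" using dZ[OF x] by (simp add: Z'_def a_def u_def \<tau>_def)
    have dX': "(X has_vector_derivative X') (at x)" using dX[OF x] by (simp add: X'_def a_def u_def)
    have dZw: "((\<lambda>t. Z t + w) has_vector_derivative Z') (at x)"
      using has_vector_derivative_add[OF dZ' has_vector_derivative_const[of w]] by simp
    have dP: "((\<lambda>t. X t - XT) has_vector_derivative X') (at x)"
      using has_vector_derivative_diff[OF dX' has_vector_derivative_const[of XT]] by simp
    have d1: "((\<lambda>t. inner (Z t) (Z t)) has_real_derivative (inner a Z' + inner Z' a)) (at x)"
      using inner_deriv[OF dZ' dZ'] by (simp add: a_def)
    have d2: "((\<lambda>t. inner (Z t) w) has_real_derivative (inner a 0 + inner Z' w)) (at x)"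
      using inner_deriv[OF dZ' has_vector_derivative_const[of w]] by (simp add: a_def)
    have d3: "((\<lambda>t. inner (Z t + w) (X t - XT)) has_real_derivative (inner (a + w) X' + inner Z' P)) (at x)"
      using inner_deriv[OF dZw dP] by (simp add: a_def P_def)
    have d4: "((\<lambda>t. 2 / (T - t)) has_real_derivative (2 / \<tau>^2)) (at x)"
      using \<tau> unfolding \<tau>_def by (auto intro!: derivative_eq_intros simp: power2_eq_square)
    have d5: "(E has_real_derivative
        (- (inner a Z' + inner Z' a) - 2 * (inner a 0 + inner Z' w) +
         ((2 / \<tau>^2) * inner (a + w) P + (2 / \<tau>) * (inner (a + w) X' + inner Z' P)))) (at x)"
    proof -
      have "((\<lambda>t. (2 / (T - t)) * inner (Z t + w) (X t - XT)) has_real_derivative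
          ((2 / \<tau>^2) * inner (Z x + w) (X x - XT) + (inner (a + w) X' + inner Z' P) * (2 / (T - x)))) (at x)"
        by (rule DERIV_mult[OF d4 d3])
      then have d6: "((\<lambda>t. (2 / (T - t)) * inner (Z t + w) (X t - XT)) has_real_derivative
          ((2 / \<tau>^2) * inner (a + w) P + (2 / \<tau>) * (inner (a + w) X' + inner Z' P))) (at x)"
        by (simp add: a_def P_def \<tau>_def mult.commute)
      have d7: "((\<lambda>t. - inner (Z t) (Z t) - 2 * inner (Z t) w) has_real_derivative
          (- (inner a Z' + inner Z' a) - 2 * (inner a 0 + inner Z' w))) (at x)"
        by (rule DERIV_diff[OF DERIV_minus[OF d1] DERIV_cmult[OF d2]])
      show ?thesis unfolding E_def by (rule DERIV_add[OF d7 d6])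
    qed
    have eq: "- (inner a Z' + inner Z' a) - 2 * (inner a 0 + inner Z' w) +
         ((2 / \<tau>^2) * inner (a + w) P + (2 / \<tau>) * (inner (a + w) X' + inner Z' P))
        = - (2 / \<tau>^2) * inner (u - w) P"
      using \<tau> by (simp add: Z'_def X'_def inner_diff_left inner_diff_right inner_add_left inner_add_right
          inner_commute power2_eq_square field_simps)
    show ?thesis using d5 eq by (simp add: u_def P_def \<tau>_def)
  qed
  have Ele: "E t \<le> E 0" if t: "t \<in> {0<..<T}" for t
  proof (rule DERIV_nonpos_imp_decreasing_open[of 0 t E])
    show "0 \<le> t" using t by simp
    fix x assume x: "0 < x" "x < t"
    then have xT: "x \<in> {0<..<T}" using t by simp
    have "0 \<le> inner (A (X x) - A XT) (X x - XT)" using mono unfolding monotone_op_def by blast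
    then have "- (2 / (T - x)^2) * inner (A (X x) - w) (X x - XT) \<le> 0"
      unfolding w_def by (simp add: mult_nonneg_nonneg)
    then show "\<exists>y. (E has_real_derivative y) (at x) \<and> y \<le> 0" using dE[OF xT] by blast
  next
    have sub: "{0..t} \<subseteq> {0..<T}" using t by auto
    have "continuous_on {0..t} (\<lambda>s. 2 / (T - s))" using t by (intro continuous_intros) auto
    then show "continuous_on {0..t} E" unfolding E_def
      using continuous_on_subset[OF cX sub] continuous_on_subset[OF cZ sub] t
      by (intro continuous_intros) auto
  qed
  define R where "R = (\<lambda>t. (2 / (T - t)) * inner (Z t + w) (X t - XT))"
  have Eeq: "E t = (norm w)^2 - (norm (Z t + w))^2 + R t" for t
    by (simp add: E_def R_def power2_norm_eq_inner inner_add_left inner_add_right inner_commute)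
  have Zw: "((\<lambda>t. Z t + w) \<longlongrightarrow> 0) (at_left T)"
    using tendsto_add[OF Zlim tendsto_const[of w]] by (simp add: w_def)
  have M0: "0 \<le> M"
  proof -
    have "0 \<le> M * (T - 0)" using Xlip[of 0] T norm_ge_zero[of "X 0 - XT"] by (simp del: norm_ge_zero)
    then show ?thesis using T by (simp add: zero_le_mult_iff)
  qed
  have R0: "(R \<longlongrightarrow> 0) (at_left T)"
  proof (rule Lim_null_comparison)
    show "\<forall>\<^sub>F t in at_left T. norm (R t) \<le> 2 * M * norm (Z t + w)"
      using eventually_at_left_real[OF T]
    proof (rule eventually_mono)
      fix t assume t: "t \<in> {0<..<T}"
      have "norm (R t) = (2 / (T - t)) * \<bar>inner (Z t + w) (X t - XT)\<bar>" using t by (simp add: R_def abs_mult)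
      also have "\<dots> \<le> (2 / (T - t)) * (norm (Z t + w) * norm (X t - XT))"
        using t by (intro mult_left_mono Cauchy_Schwarz_ineq2) auto
      also have "\<dots> \<le> (2 / (T - t)) * (norm (Z t + w) * (M * (T - t)))"
        using t Xlip[of t] by (intro mult_left_mono) auto
      also have "\<dots> = 2 * M * norm (Z t + w)" using t by (simp add: field_simps)
      finally show "norm (R t) \<le> 2 * M * norm (Z t + w)" .
    qed
    show "((\<lambda>t. 2 * M * norm (Z t + w)) \<longlongrightarrow> 0) (at_left T)"
      using tendsto_mult_left[OF tendsto_norm[OF Zw], of "2 * M"] by simp
  qed
  have "(E \<longlongrightarrow> (norm w)^2 - 0^2 + 0) (at_left T)"
  proof -
    have Zn: "((\<lambda>t. norm (Z t + w)) \<longlongrightarrow> 0) (at_left T)" using tendsto_norm[OF Zw] by simp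
    show ?thesis unfolding Eeq by (intro tendsto_intros Zn R0)
  qed
  then have Elim: "(E \<longlongrightarrow> (norm w)^2) (at_left T)" by simp
  have "(norm w)^2 \<le> E 0"
  proof (rule tendsto_upperbound[OF Elim])
    show "\<forall>\<^sub>F t in at_left T. E t \<le> E 0"
      using eventually_at_left_real[OF T] by (rule eventually_mono) (rule Ele)
    show "\<not> trivial_limit (at_left T)" by simp
  qed
  then show ?thesis using E0 by (simp add: w_def)
qed

lemma uniq:
  fixes A :: "'a::euclidean_space \<Rightarrow> 'a"
  assumes lip: "L-lipschitz_on UNIV A" and T: "0 < T"
    and cX: "continuous_on UNIV X" and fp: "\<forall>t\<in>{0..T}. X t = PhiX A T X0 X t"
    and sol: "dual_anchor_sol A T X0 X' Z'"
  shows "\<forall>t\<in>{0..<T}. X' t = X t \<and> Z' t = zf T (\<lambda>r. A (X r)) t"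
proof -
  have L0: "0 \<le> L" using lip by (rule lipschitz_on_nonneg)
  have cA: "continuous_on UNIV A" using lip by (rule lipschitz_on_continuous_on)
  have cX': "continuous_on {0..<T} X'" and cZ': "continuous_on {0..<T} Z'" and X'0: "X' 0 = X0" and Z'0: "Z' 0 = 0"
    and dX': "\<And>t. t \<in> {0<..<T} \<Longrightarrow> (X' has_vector_derivative (- Z' t - A (X' t))) (at t)"
    and dZ': "\<And>t. t \<in> {0<..<T} \<Longrightarrow> (Z' has_vector_derivative (- (1 / (T - t)) *\<^sub>R Z' t - (1 / (T - t)) *\<^sub>R A (X' t))) (at t)"
    using sol unfolding dual_anchor_sol_def by auto
  have Zrep: "Z' t = zf T (\<lambda>r. A (X' r)) t" if t: "t \<in> {0..<T}" for t
  proof (cases "t = 0")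
    case True
    then show ?thesis using T Z'0 by (simp add: zf_def)
  next
    case False
    then have t0: "0 < t" "t < T" using t by auto
    have sub: "{0..t} \<subseteq> {0..<T}" using t0 by auto
    define q where "q = (\<lambda>s. (1 / (T - s)) *\<^sub>R Z' s)"
    have h1: "((\<lambda>s. - ((1 / (T - s)^2) *\<^sub>R A (X' s))) has_integral (q t - q 0)) {0..t}"
    proof (rule fundamental_theorem_of_calculus_interior)
      show "0 \<le> t" using t0 by simp
      have "continuous_on {0..t} (\<lambda>s. 1 / (T - s))" using t0 by (intro continuous_intros) auto
      then show "continuous_on {0..t} q" unfolding q_def
        by (rule continuous_on_scaleR[OF _ continuous_on_subset[OF cZ' sub]])
      fix s assume s: "s \<in> {0<..<t}"
      then have sT: "s \<in> {0<..<T}" using t0 by auto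
      have d1: "((\<lambda>s. 1 / (T - s)) has_real_derivative 1 / (T - s)^2) (at s)"
        using sT by (auto intro!: derivative_eq_intros simp: power2_eq_square)
      have "(q has_vector_derivative ((1 / (T - s)) *\<^sub>R (- (1 / (T - s)) *\<^sub>R Z' s - (1 / (T - s)) *\<^sub>R A (X' s))
          + (1 / (T - s)^2) *\<^sub>R Z' s)) (at s)"
        unfolding q_def by (rule has_vector_derivative_scaleR[OF d1 dZ'[OF sT]])
      moreover have "(1 / (T - s)) *\<^sub>R (- (1 / (T - s)) *\<^sub>R Z' s - (1 / (T - s)) *\<^sub>R A (X' s))
          + (1 / (T - s)^2) *\<^sub>R Z' s = - ((1 / (T - s)^2) *\<^sub>R A (X' s))"
        by (simp add: scaleR_diff_right power2_eq_square)
      ultimately show "(q has_vector_derivative - ((1 / (T - s)^2) *\<^sub>R A (X' s))) (at s)" by simp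
    qed
    have q0: "q 0 = 0" by (simp add: q_def Z'0)
    have "((\<lambda>s. - (- ((1 / (T - s)^2) *\<^sub>R A (X' s)))) has_integral - (q t - q 0)) {0..t}"
      by (rule has_integral_neg[OF h1])
    then have "((\<lambda>s. (1 / (T - s)^2) *\<^sub>R A (X' s)) has_integral - q t) {0..t}"
      by (simp add: q0)
    then have "integral {0..t} (\<lambda>s. (1 / (T - s)^2) *\<^sub>R A (X' s)) = - q t" by (rule integral_unique)
    then have "zf T (\<lambda>r. A (X' r)) t = (T - t) *\<^sub>R q t" using t0 by (simp add: zf_def)
    also have "\<dots> = Z' t" using t0 by (simp add: q_def)
    finally show ?thesis by simp
  qed
  have Xrep: "X' t = PhiX A T X0 X' t" if t: "t \<in> {0..<T}" for t
  proof -
    have t0: "0 \<le> t" "t < T" using t by auto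
    have sub: "{0..t} \<subseteq> {0..<T}" using t0 by auto
    have h1: "((\<lambda>s. - Z' s - A (X' s)) has_integral (X' t - X' 0)) {0..t}"
    proof (rule fundamental_theorem_of_calculus_interior)
      show "0 \<le> t" by fact
      show "continuous_on {0..t} X'" by (rule continuous_on_subset[OF cX' sub])
      fix s assume s: "s \<in> {0<..<t}"
      then show "(X' has_vector_derivative - Z' s - A (X' s)) (at s)" using t0 by (intro dX') auto
    qed
    have eqs: "- Z' s - A (X' s) = - GX A T X' s" if "s \<in> {0..t}" for s
    proof -
      have "s \<in> {0..<T}" using that t0 by auto
      then show ?thesis using Zrep[of s] by (simp add: GX_def)
    qed
    have "((\<lambda>s. - Z' s - A (X' s)) has_integral (X' t - X' 0)) {0..t} = ((\<lambda>s. - GX A T X' s) has_integral (X' t - X' 0)) {0..t}"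
      by (rule has_integral_cong) (rule eqs)
    then have h2: "((\<lambda>s. - GX A T X' s) has_integral (X' t - X0)) {0..t}"
      using h1 X'0 by simp
    have "((\<lambda>s. - (- GX A T X' s)) has_integral - (X' t - X0)) {0..t}"
      by (rule has_integral_neg[OF h2])
    then have "(GX A T X' has_integral - (X' t - X0)) {0..t}"
      by simp
    then have "integral {0..t} (GX A T X') = X0 - X' t" by (simp add: integral_unique)
    then show ?thesis by (simp add: PhiX_def)
  qed
  define K where "K = 4 * L + 1"
  have K: "0 < K" using L0 by (simp add: K_def)
  have KL: "2 * L / K \<le> 1 / 2" using K L0 by (simp add: K_def field_simps)
  have cXT: "continuous_on {0..T} X" by (rule continuous_on_subset[OF cX]) auto
  have cGX: "continuous_on {0..T} (GX A T X)" by (rule GX_cont_closed[OF cA cXT T])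
  have cGX': "continuous_on {0..<T} (GX A T X')" by (rule GX_cont_open[OF cA cX'])
  have Xeq: "X' s = X s" if b: "0 \<le> b" "b < T" and s: "s \<in> {0..b}" for b s
  proof -
    have subb: "{0..b} \<subseteq> {0..<T}" using b by auto
    have subb': "{0..b} \<subseteq> {0..T}" using b by auto
    define \<Delta> where "\<Delta> = (\<lambda>s. exp (- (K * s)) * norm (X' s - X s))"
    have c\<Delta>: "continuous_on {0..b} \<Delta>" unfolding \<Delta>_def
      using continuous_on_subset[OF cX' subb] continuous_on_subset[OF cX, of "{0..b}"]
      by (intro continuous_intros) auto
    obtain m where m: "m \<in> {0..b}" and mmax: "\<And>y. y \<in> {0..b} \<Longrightarrow> \<Delta> y \<le> \<Delta> m"
      using continuous_attains_sup[OF compact_Icc _ c\<Delta>] b by auto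
    define D where "D = \<Delta> m"
    have D0: "0 \<le> D" by (simp add: D_def \<Delta>_def)
    have bnd: "norm (X' y - X y) \<le> exp (K * y) * D" if y: "y \<in> {0..b}" for y
    proof -
      have h: "exp (- (K * y)) * norm (X' y - X y) \<le> D" using mmax[OF y] by (simp add: D_def \<Delta>_def)
      have "norm (X' y - X y) = (exp (K * y) * exp (- (K * y))) * norm (X' y - X y)"
        by (simp add: exp_minus_inverse)
      also have "\<dots> = exp (K * y) * (exp (- (K * y)) * norm (X' y - X y))" by (rule mult.assoc)
      also have "\<dots> \<le> exp (K * y) * D" using h by (intro mult_left_mono) auto
      finally show ?thesis .
    qed
    have step: "norm (X' y - X y) \<le> (1 / 2) * exp (K * y) * D" if y: "y \<in> {0..b}" for y
    proof -
      have yT: "y \<in> {0..T}" "y \<in> {0..<T}" using y b by auto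
      have e1: "X' y = PhiX A T X0 X' y" by (rule Xrep[OF yT(2)])
      have e2: "X y = PhiX A T X0 X y" using fp yT(1) by blast
      have "X' y - X y = PhiX A T X0 X' y - PhiX A T X0 X y"
        by (subst e1, subst e2, rule refl)
      also have "\<dots> = - (integral {0..y} (GX A T X') - integral {0..y} (GX A T X))"
        by (simp add: PhiX_def)
      finally have "norm (X' y - X y) = norm (integral {0..y} (GX A T X') - integral {0..y} (GX A T X))"
        by (simp add: norm_minus_commute)
      also have "\<dots> \<le> (2 * L / K) * exp (K * y) * D"
        using b y
        by (intro core[OF lip K, of b T] continuous_on_subset[OF cX' subb] continuous_on_subset[OF cXT subb']
            continuous_on_subset[OF cGX' subb] continuous_on_subset[OF cGX subb'] bnd) auto
      also have "\<dots> \<le> (1 / 2) * exp (K * y) * D"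
        using KL D0 by (intro mult_right_mono) auto
      finally show ?thesis .
    qed
    have "D \<le> (1 / 2) * D"
    proof -
      have "D = exp (- (K * m)) * norm (X' m - X m)" by (simp add: D_def \<Delta>_def)
      also have "\<dots> \<le> exp (- (K * m)) * ((1 / 2) * exp (K * m) * D)"
        using step[OF m] by (intro mult_left_mono) auto
      also have "\<dots> = (1 / 2) * D" by (simp add: exp_minus field_simps)
      finally show ?thesis .
    qed
    then have "D = 0" using D0 by linarith
    then have "norm (X' s - X s) \<le> 0" using bnd[OF s] by simp
    then show ?thesis by simp
  qed
  show ?thesis
  proof
    fix t assume t: "t \<in> {0..<T}"
    have Xt: "X' t = X t" using Xeq[of t t] t by auto
    have "norm (zf T (\<lambda>r. A (X' r)) t - zf T (\<lambda>r. A (X r)) t) \<le> 0"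
    proof (rule zf_diff_bound)
      show "0 \<le> t" "t \<le> T" using t by auto
      have sub: "{0..t} \<subseteq> {0..<T}" using t by auto
      show "continuous_on {0..t} (\<lambda>r. A (X' r))"
        using continuous_on_compose[OF continuous_on_subset[OF cX' sub] continuous_on_subset[OF cA]]
        by (simp add: o_def)
      show "continuous_on {0..t} (\<lambda>r. A (X r))"
        using continuous_on_compose[OF continuous_on_subset[OF cX, of "{0..t}"] continuous_on_subset[OF cA]]
        by (simp add: o_def)
      fix s assume "s \<in> {0..t}"
      then have "X' s = X s" using Xeq[of t s] t by auto
      then show "norm (A (X' s) - A (X s)) \<le> 0" by simp
    qed
    then have "zf T (\<lambda>r. A (X' r)) t = zf T (\<lambda>r. A (X r)) t" by simp
    then show "X' t = X t \<and> Z' t = zf T (\<lambda>r. A (X r)) t" using Xt Zrep[OF t] by simp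
  qed
qed

theorem theorem7p1:
  fixes A :: "'a::euclidean_space \<Rightarrow> 'a" and T :: real and X0 :: 'a
  assumes lip: "\<exists>L. L-lipschitz_on UNIV A"
    and mono: "monotone_op A"
    and T: "T > 0"
  shows "\<exists>X Z. dual_anchor_sol A T X0 X Z
           \<and> (\<forall>X' Z'. dual_anchor_sol A T X0 X' Z' \<longrightarrow> (\<forall>t\<in>{0..<T}. X' t = X t \<and> Z' t = Z t))
           \<and> (\<exists>XT. (X \<longlongrightarrow> XT) (at_left T)
                  \<and> (\<forall>Xs. A Xs = 0 \<longrightarrow> (norm (A XT))\<^sup>2 \<le> 4 * (norm (X0 - Xs))\<^sup>2 / T\<^sup>2))"
proof -
  obtain L where L: "L-lipschitz_on UNIV A" using lip by blast
  have cA: "continuous_on UNIV A" using L by (rule lipschitz_on_continuous_on)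
  obtain X where cX: "continuous_on UNIV X" and fp: "\<forall>t\<in>{0..T}. X t = PhiX A T X0 X t"
    using exists_fp[OF L T, of X0] by blast
  define Z where "Z = zf T (\<lambda>r. A (X r))"
  have cXT: "continuous_on {0..T} X" by (rule continuous_on_subset[OF cX]) auto
  have cu: "continuous_on {0..T} (\<lambda>r. A (X r))"
    using continuous_on_compose[OF cXT continuous_on_subset[OF cA]] by (simp add: o_def)
  have cu': "continuous_on {0..<T} (\<lambda>r. A (X r))" by (rule continuous_on_subset[OF cu]) auto
  have cG: "continuous_on {0..T} (GX A T X)" by (rule GX_cont_closed[OF cA cXT T])
  have sol: "dual_anchor_sol A T X0 X Z"
    unfolding dual_anchor_sol_def
  proof (intro conjI ballI)
    show "continuous_on {0..<T} X" by (rule continuous_on_subset[OF cX]) auto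
    show "continuous_on {0..<T} Z" unfolding Z_def by (rule zf_cont[OF cu'])
    have "0 \<in> {0..T}" using T by simp
    then have "X 0 = PhiX A T X0 X 0" using fp by blast
    then show "X 0 = X0" by (simp add: PhiX_def)
    show "Z 0 = 0" using T by (simp add: Z_def zf_def)
  next
    fix t assume t: "t \<in> {0<..<T}"
    show "(Z has_vector_derivative (- (1 / (T - t)) *\<^sub>R Z t - (1 / (T - t)) *\<^sub>R A (X t))) (at t)"
      unfolding Z_def using zf_deriv[OF cu', of t] t by simp
    have tT: "t \<in> {0..T}" using t by simp
    have "((\<lambda>s. integral {0..s} (GX A T X)) has_vector_derivative GX A T X t) (at t within {0..T})"
      by (rule integral_has_vector_derivative[OF cG tT])
    moreover have "at t within {0..T} = at t" using t by (intro at_within_Icc_at) auto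
    ultimately have "((\<lambda>s. integral {0..s} (GX A T X)) has_vector_derivative GX A T X t) (at t)"
      by (simp only:)
    then have "(PhiX A T X0 X has_vector_derivative (0 - GX A T X t)) (at t)"
      unfolding PhiX_def by (intro has_vector_derivative_diff has_vector_derivative_const)
    then have dP: "(PhiX A T X0 X has_vector_derivative (- Z t - A (X t))) (at t)"
      by (simp add: GX_def Z_def)
    show "(X has_vector_derivative (- Z t - A (X t))) (at t)"
    proof (rule has_vector_derivative_transform_within_open[OF dP, of "{0<..<T}"])
      show "open {0<..<T}" by simp
      show "t \<in> {0<..<T}" by (rule t)
      fix y assume "y \<in> {0<..<T}"
      then have "y \<in> {0..T}" by simp
      then show "PhiX A T X0 X y = X y" using fp by auto
    qed
  qed
  have uq: "\<forall>X' Z'. dual_anchor_sol A T X0 X' Z' \<longrightarrow> (\<forall>t\<in>{0..<T}. X' t = X t \<and> Z' t = Z t)"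
    using uniq[OF L T cX fp] unfolding Z_def by blast
  have lim: "(X \<longlongrightarrow> X T) (at_left T)"
  proof -
    have "isCont X T" using cX by (simp add: continuous_on_eq_continuous_at)
    then have "(X \<longlongrightarrow> X T) (at T)" by (rule isContD)
    then show ?thesis by (rule tendsto_within_subset) auto
  qed
  have Zlim: "(Z \<longlongrightarrow> - A (X T)) (at_left T)" unfolding Z_def by (rule zf_lim[OF cu T])
  obtain M where M: "\<And>s. s \<in> {0..T} \<Longrightarrow> norm (GX A T X s) \<le> M"
    using compact_imp_bounded[OF compact_continuous_image[OF cG compact_Icc]] bounded_iff
    by (metis (no_types, lifting) image_eqI)
  have Xlip: "norm (X t - X T) \<le> M * (T - t)" if t: "t \<in> {0..<T}" for t
  proof -
    have iG: "GX A T X integrable_on {0..T}" by (rule integrable_continuous_interval[OF cG])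
    have tT: "t \<in> {0..T}" "T \<in> {0..T}" using t by auto
    have e1: "X t = PhiX A T X0 X t" using fp tT(1) by blast
    have e2: "X T = PhiX A T X0 X T" using fp tT(2) by blast
    have comb: "integral {0..t} (GX A T X) + integral {t..T} (GX A T X) = integral {0..T} (GX A T X)"
      using t by (intro Henstock_Kurzweil_Integration.integral_combine iG) auto
    have "X t - X T = integral {t..T} (GX A T X)"
      by (subst e1, subst e2) (simp add: PhiX_def comb[symmetric])
    then have "norm (X t - X T) = norm (integral {t..T} (GX A T X))" by simp
    also have "\<dots> \<le> integral {t..T} (\<lambda>s. M)"
    proof (rule integral_norm_bound_integral)
      show "GX A T X integrable_on {t..T}"
        by (rule integrable_continuous_interval, rule continuous_on_subset[OF cG]) (use t in auto)
      show "(\<lambda>s. M) integrable_on {t..T}" using has_integral_const_real[of M t T] by blast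
      fix s assume "s \<in> {t..T}"
      then show "norm (GX A T X s) \<le> M" using t by (intro M) auto
    qed
    also have "\<dots> = M * (T - t)" using t by simp
    finally show ?thesis .
  qed
  have bound: "(norm (A (X T)))^2 \<le> 4 * (norm (X0 - Xs))^2 / T^2" if Xs: "A Xs = 0" for Xs
  proof -
    define w where "w = A (X T)"
    have en: "(norm w)^2 \<le> (2 / T) * inner w (X0 - X T)"
      unfolding w_def by (rule energy[OF mono T sol Zlim Xlip])
    have "0 \<le> inner (A (X T) - A Xs) (X T - Xs)" using mono unfolding monotone_op_def by blast
    then have m: "0 \<le> inner w (X T - Xs)" using Xs by (simp add: w_def)
    have "inner w (X0 - X T) = inner w (X0 - Xs) - inner w (X T - Xs)"
      by (simp add: inner_diff_right)
    also have "\<dots> \<le> inner w (X0 - Xs)" using m by simp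
    also have "\<dots> \<le> norm w * norm (X0 - Xs)" by (rule Cauchy_Schwarz_ineq2[THEN order.trans[OF abs_ge_self]])
    finally have "inner w (X0 - X T) \<le> norm w * norm (X0 - Xs)" .
    then have "(norm w)^2 \<le> (2 / T) * (norm w * norm (X0 - Xs))"
      using en T by (smt (verit) divide_pos_pos mult_left_mono)
    then have le: "norm w * norm w \<le> norm w * ((2 / T) * norm (X0 - Xs))"
      by (simp add: power2_eq_square algebra_simps)
    have "norm w \<le> (2 / T) * norm (X0 - Xs)"
    proof (cases "norm w = 0")
      case True
      then show ?thesis using T by simp
    next
      case False
      then have "0 < norm w" by simp
      then show ?thesis using mult_le_cancel_left_pos[OF \<open>0 < norm w\<close>] le by blast
    qed
    then have "(norm w)^2 \<le> ((2 / T) * norm (X0 - Xs))^2" by (intro power_mono) auto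
    also have "\<dots> = 4 * (norm (X0 - Xs))^2 / T^2" by (simp add: power_mult_distrib power_divide)
    finally show ?thesis by (simp add: w_def)
  qed
  show ?thesis
    using sol uq lim bound by blast
qed

end
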